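(* Let $R$ be a ring with unity and involution $*$, let $a,v\in R$, and let $m,n$ be nonnegative integers with $m+n\geq 1$. Then (1) $a$ is left invertible if and only if $a$ is left dual $(1,1)$-core invertible; (2) $a$ is left dual pseudo core invertible if and only if $a^m$ is left dual $(a^k,a^n)$-core invertible for some positive integer $k$; (3) $a$ is left dual core invertible if and only if $a^m$ is left dual $(a,a^n)$-core invertible; (4) $a$ is left dual $v$-core invertible if and only if $v$ is left dual $(a,a)$-core invertible.
   Context: Here $a^0=1$. For $a,b,c\in R$, $a$ is left dual $(b,c)$-core invertible if there exists $x\in Rc$ such that $bxab=b$ and $(xab)^*=xab$. An element $a$ is left dual pseudo core invertible if there exist $x\in R$ and a positive integer $k$ such that $a^kxa=a^k$, $(xa)^*=xa$ and $x^2a=x$; it is left dual core invertible if there exists $x\in R$ with $axa=a$, $(xa)^*=xa$ and $x^2a=x$. For $a,v\in R$, $a$ is left dual $v$-core invertible if there exists $x\in R$ such that $axva=a$, $(xva)^*=xva$ and $x^2va=x$. *)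

theory Defs
  imports Main
begin

definition involution :: "('a::ring_1 \<Rightarrow> 'a) \<Rightarrow> bool" where
  "involution s \<longleftrightarrow> (\<forall>x. s (s x) = x) \<and> (\<forall>x y. s (x + y) = s x + s y)
     \<and> (\<forall>x y. s (x * y) = s y * s x)"

definition left_invertible :: "'a::ring_1 \<Rightarrow> bool" where
  "left_invertible a \<longleftrightarrow> (\<exists>x. x * a = 1)"

definition left_dual_bc_core_inv :: "('a::ring_1 \<Rightarrow> 'a) \<Rightarrow> 'a \<Rightarrow> 'a \<Rightarrow> 'a \<Rightarrow> bool" where
  "left_dual_bc_core_inv s a b c \<longleftrightarrow>
     (\<exists>x. (\<exists>r. x = r * c) \<and> b * x * a * b = b \<and> s (x * a * b) = x * a * b)"

definition left_dual_pseudo_core_inv :: "('a::ring_1 \<Rightarrow> 'a) \<Rightarrow> 'a \<Rightarrow> bool" where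
  "left_dual_pseudo_core_inv s a \<longleftrightarrow>
     (\<exists>x k. k > (0::nat) \<and> a ^ k * x * a = a ^ k \<and> s (x * a) = x * a \<and> x ^ 2 * a = x)"

definition left_dual_core_inv :: "('a::ring_1 \<Rightarrow> 'a) \<Rightarrow> 'a \<Rightarrow> bool" where
  "left_dual_core_inv s a \<longleftrightarrow>
     (\<exists>x. a * x * a = a \<and> s (x * a) = x * a \<and> x ^ 2 * a = x)"

definition left_dual_v_core_inv :: "('a::ring_1 \<Rightarrow> 'a) \<Rightarrow> 'a \<Rightarrow> 'a \<Rightarrow> bool" where
  "left_dual_v_core_inv s a v \<longleftrightarrow>
     (\<exists>x. a * x * v * a = a \<and> s (x * v * a) = x * v * a \<and> x ^ 2 * v * a = x)"

end

theory Submission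
  imports Defs
begin

lemma inv_one: assumes "involution s" shows "s 1 = (1::'a::ring_1)"
proof -
  have "s (s 1 * 1) = s 1 * s (s 1)" using assms unfolding involution_def by metis
  then have "s (s 1) = s 1 * 1" using assms unfolding involution_def by (metis mult_1_right)
  then show ?thesis using assms unfolding involution_def by (metis mult_1_right)
qed

lemma L1: fixes x a :: "'a::monoid_mult" assumes "x*x*a = x" shows "x^(j+1)*a^j = x"
proof (induction j)
  case 0 then show ?case by simp
next
  case (Suc j)
  have "x^(Suc j+1)*a^(Suc j) = x * (x^(j+1)*a^j) * a"
    by (metis Suc_eq_plus1 power_Suc power_Suc2 mult.assoc)
  also have "\<dots> = x" using Suc assms by simp
  finally show ?case .
qed

lemma L2: fixes x a :: "'a::monoid_mult" assumes "x*x*a = x" shows "x^(j+1)*a^(j+1) = x*a"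
proof (induction j)
  case 0 then show ?case by simp
next
  case (Suc j)
  have e1: "x^(Suc j+1) = x^j*x*x" by (simp add: power_Suc2 del: power_Suc)
  have e2: "a^(Suc j+1) = a*a^(j+1)" by simp
  have "x^(Suc j+1)*a^(Suc j+1) = x^j * (x*x*a) * a^(j+1)"
    unfolding e1 e2 by (simp add: mult.assoc)
  also have "\<dots> = x^(j+1)*a^(j+1)" using assms by (simp add: mult.assoc power_commutes)
  finally show ?case using Suc by simp
qed

lemma powsplit: fixes a :: "'a::monoid_mult" shows "a^(i+j) = a^i * a^j"
  by (simp add: power_add)

lemma fwd:
  fixes x a :: "'a::ring_1"
  assumes k: "k > 0" and h1: "a^k * x * a = a^k" and h2: "s (x*a) = x*a" and h3: "x^2*a = x"
  shows "left_dual_bc_core_inv s (a^m) (a^k) (a^n)"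
proof -
  have xx: "x*x*a = x" using h3 by (simp add: power2_eq_square)
  define y where "y = x^(m+k)"
  obtain k' where kk: "m+k = k'+1" using k by (metis add_gr_0 Suc_eq_plus1 gr0_implies_Suc)
  have ya: "y * a^m * a^k = x*a"
    using L2[OF xx, of k'] kk by (simp add: y_def mult.assoc power_add[symmetric])
  have yr: "y = x^(k'+(n+1)) * a^n"
  proof -
    have "y = x^k' * x" using kk by (simp add: y_def power_Suc2 del: power_Suc)
    then have "y = x^k' * (x^(n+1)*a^n)" using L1[OF xx, of n] by simp
    also have "\<dots> = x^(k'+(n+1)) * a^n"
      by (simp only: mult.assoc[symmetric] power_add[symmetric])
    finally show ?thesis .
  qed
  show ?thesis unfolding left_dual_bc_core_inv_def
    apply (rule exI[of _ y])
    apply (intro conjI)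
    subgoal using yr by blast
    using ya h1 h2 by (auto simp: mult.assoc)
qed

lemma bwd:
  fixes y a :: "'a::ring_1"
  assumes k: "k > 0" and mn: "m+n \<ge> 1" and yr: "y = r * a^n"
    and h1: "a^k * y * a^m * a^k = a^k" and h2: "s (y * a^m * a^k) = y * a^m * a^k"
  shows "\<exists>x. a^k * x * a = a^k \<and> s (x*a) = x*a \<and> x^2*a = x"
proof -
  define x where "x = y * a^(m+k-1)"
  have xa: "x * a = y * a^m * a^k"
    using k by (simp add: x_def mult.assoc power_add[symmetric] power_Suc2[symmetric])
  have xr: "x = (r * a^(n+m-1)) * a^k"
    using k mn by (simp add: x_def yr mult.assoc power_add[symmetric] algebra_simps)
  have "x^2*a = x * (x*a)" by (simp add: power2_eq_square mult.assoc)
  also have "\<dots> = r * a^(n+m-1) * (a^k * y * a^m * a^k)"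
    using xa xr by (simp add: mult.assoc)
  also have "\<dots> = x" using h1 xr by simp
  finally have "x^2*a = x" .
  moreover have "a^k * x * a = a^k" using xa h1 by (simp add: mult.assoc)
  ultimately show ?thesis using xa h2 by auto
qed

theorem theorem3p1:
  fixes s :: "'a::ring_1 \<Rightarrow> 'a" and a v :: 'a and m n :: nat
  assumes "involution s" and "m + n \<ge> 1"
  shows "(left_invertible a \<longleftrightarrow> left_dual_bc_core_inv s a 1 1)
    \<and> (left_dual_pseudo_core_inv s a \<longleftrightarrow>
         (\<exists>k::nat. k > 0 \<and> left_dual_bc_core_inv s (a ^ m) (a ^ k) (a ^ n)))
    \<and> (left_dual_core_inv s a \<longleftrightarrow> left_dual_bc_core_inv s (a ^ m) a (a ^ n))
    \<and> (left_dual_v_core_inv s a v \<longleftrightarrow> left_dual_bc_core_inv s v a a)"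
proof (intro conjI)
  have s1: "s 1 = 1" using inv_one[OF assms(1)] .
  show "left_invertible a \<longleftrightarrow> left_dual_bc_core_inv s a 1 1"
    unfolding left_invertible_def left_dual_bc_core_inv_def using s1 by auto
  show "left_dual_pseudo_core_inv s a \<longleftrightarrow>
         (\<exists>k::nat. k > 0 \<and> left_dual_bc_core_inv s (a ^ m) (a ^ k) (a ^ n))"
  proof
    assume "left_dual_pseudo_core_inv s a"
    then obtain x k where "k > (0::nat)" "a ^ k * x * a = a ^ k" "s (x * a) = x * a" "x ^ 2 * a = x"
      unfolding left_dual_pseudo_core_inv_def by blast
    then show "\<exists>k::nat. k > 0 \<and> left_dual_bc_core_inv s (a ^ m) (a ^ k) (a ^ n)"
      using fwd by blast
  next
    assume "\<exists>k::nat. k > 0 \<and> left_dual_bc_core_inv s (a ^ m) (a ^ k) (a ^ n)"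
    then obtain k y r where "k > (0::nat)" "y = r * a^n" "a^k * y * a^m * a^k = a^k"
      "s (y * a^m * a^k) = y * a^m * a^k"
      unfolding left_dual_bc_core_inv_def by blast
    with bwd[of k m n y r a s] assms(2)
    show "left_dual_pseudo_core_inv s a" unfolding left_dual_pseudo_core_inv_def by blast
  qed
  show "left_dual_core_inv s a \<longleftrightarrow> left_dual_bc_core_inv s (a ^ m) a (a ^ n)"
  proof
    assume "left_dual_core_inv s a"
    then obtain x where "a^1 * x * a = a^1" "s (x * a) = x * a" "x ^ 2 * a = x"
      unfolding left_dual_core_inv_def by auto
    with fwd[of 1 a x s m n] show "left_dual_bc_core_inv s (a ^ m) a (a ^ n)" by simp
  next
    assume "left_dual_bc_core_inv s (a ^ m) a (a ^ n)"
    then obtain y r where "y = r * a^n" "a^1 * y * a^m * a^1 = a^1"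
      "s (y * a^m * a^1) = y * a^m * a^1"
      unfolding left_dual_bc_core_inv_def by auto
    with bwd[of 1 m n y r a s] assms(2) show "left_dual_core_inv s a"
      unfolding left_dual_core_inv_def by simp
  qed
  show "left_dual_v_core_inv s a v \<longleftrightarrow> left_dual_bc_core_inv s v a a"
  proof
    assume "left_dual_v_core_inv s a v"
    then obtain x where h: "a * x * v * a = a" "s (x * v * a) = x * v * a" "x ^ 2 * v * a = x"
      unfolding left_dual_v_core_inv_def by blast
    have "x = (x*x*v) * a" using h(3) by (simp add: power2_eq_square mult.assoc)
    then show "left_dual_bc_core_inv s v a a" unfolding left_dual_bc_core_inv_def
      using h by blast
  next
    assume "left_dual_bc_core_inv s v a a"
    then obtain y r where h: "y = r * a" "a * y * v * a = a" "s (y * v * a) = y * v * a"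
      unfolding left_dual_bc_core_inv_def by blast
    have "y^2 * v * a = r * (a * y * v * a)" using h(1) by (simp add: power2_eq_square mult.assoc)
    also have "\<dots> = y" using h by simp
    finally show "left_dual_v_core_inv s a v" unfolding left_dual_v_core_inv_def using h by blast
  qed
qed

end
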